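(* Assume $\mathrm{char}(\mathbb{F})=p>0$ and $0\ne h\in\mathbb{F}[x]$. Then $A_h$ is not a Noetherian UFD.
   Context: For $h\in\mathbb{F}[x]$, $A_h$ is the unital associative $\mathbb{F}$-algebra generated by $x,\hat y$ with defining relation $\hat yx-x\hat y=h$; it is a Noetherian domain. A Noetherian domain $R$ is a Noetherian unique factorization ring (UFR) if every nonzero prime ideal of $R$ contains a nonzero prime ideal generated by a normal element (an element $v$ with $vR=Rv$). It is a Noetherian unique factorization domain (UFD) if it is a Noetherian UFR and, for every height one prime ideal $P$, the ring $R/P$ is a domain. The height of a prime $P$ is the supremum of lengths of chains of prime ideals ending at $P$. *)

theory Defs
  imports "HOL-Algebra.QuotRing" "HOL-Computational_Algebra.Polynomial" "HOL-Library.Extended_Nat"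
begin

text \<open>Elements of A_h are represented in the PBW basis x^i y^j, i.e. as polynomials
  sum_j a_j y^j in y with coefficients a_j in F[x] written on the left.
  Commutation rule: y f = f y + h f' for f in F[x]; this is exactly the
  defining relation y x - x y = h extended as a derivation.\<close>

definition A_delta :: "'a::field poly \<Rightarrow> 'a poly \<Rightarrow> 'a poly" where
  "A_delta h c = h * pderiv c"

definition A_ymul :: "'a::field poly \<Rightarrow> 'a poly poly \<Rightarrow> 'a poly poly" where
  "A_ymul h q = pCons 0 q + map_poly (A_delta h) q"

definition A_mult :: "'a::field poly \<Rightarrow> 'a poly poly \<Rightarrow> 'a poly poly \<Rightarrow> 'a poly poly" where
  "A_mult h p q = (\<Sum>i\<le>degree p. smult (coeff p i) ((A_ymul h ^^ i) q))"

definition A_alg :: "'a::field poly \<Rightarrow> 'a poly poly ring" where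
  "A_alg h = \<lparr>carrier = UNIV, monoid.mult = A_mult h, one = 1, zero = 0, add = (+)\<rparr>"

definition nc_domain :: "('a, 'b) ring_scheme \<Rightarrow> bool" where
  "nc_domain R \<longleftrightarrow> ring R \<and> \<one>\<^bsub>R\<^esub> \<noteq> \<zero>\<^bsub>R\<^esub> \<and>
     (\<forall>a\<in>carrier R. \<forall>b\<in>carrier R. a \<otimes>\<^bsub>R\<^esub> b = \<zero>\<^bsub>R\<^esub> \<longrightarrow> a = \<zero>\<^bsub>R\<^esub> \<or> b = \<zero>\<^bsub>R\<^esub>)"

definition left_ideal :: "'a set \<Rightarrow> ('a, 'b) ring_scheme \<Rightarrow> bool" where
  "left_ideal I R \<longleftrightarrow> additive_subgroup I R \<and> (\<forall>r\<in>carrier R. \<forall>a\<in>I. r \<otimes>\<^bsub>R\<^esub> a \<in> I)"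

definition right_ideal :: "'a set \<Rightarrow> ('a, 'b) ring_scheme \<Rightarrow> bool" where
  "right_ideal I R \<longleftrightarrow> additive_subgroup I R \<and> (\<forall>r\<in>carrier R. \<forall>a\<in>I. a \<otimes>\<^bsub>R\<^esub> r \<in> I)"

definition nc_noetherian :: "('a, 'b) ring_scheme \<Rightarrow> bool" where
  "nc_noetherian R \<longleftrightarrow> ring R \<and>
     (\<forall>I :: nat \<Rightarrow> 'a set. (\<forall>n. left_ideal (I n) R \<and> I n \<subseteq> I (Suc n)) \<longrightarrow>
        (\<exists>N. \<forall>n\<ge>N. I n = I N)) \<and>
     (\<forall>I :: nat \<Rightarrow> 'a set. (\<forall>n. right_ideal (I n) R \<and> I n \<subseteq> I (Suc n)) \<longrightarrow>
        (\<exists>N. \<forall>n\<ge>N. I n = I N))"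

text \<open>Prime ideal of a (noncommutative) ring: proper two-sided ideal P with
  aRb \<subseteq> P implying a \<in> P or b \<in> P (equivalently IJ \<subseteq> P implies I \<subseteq> P or J \<subseteq> P).\<close>
definition nc_prime_ideal :: "('a, 'b) ring_scheme \<Rightarrow> 'a set \<Rightarrow> bool" where
  "nc_prime_ideal R P \<longleftrightarrow> ideal P R \<and> P \<noteq> carrier R \<and>
     (\<forall>a\<in>carrier R. \<forall>b\<in>carrier R.
        (\<forall>r\<in>carrier R. a \<otimes>\<^bsub>R\<^esub> r \<otimes>\<^bsub>R\<^esub> b \<in> P) \<longrightarrow> a \<in> P \<or> b \<in> P)"

definition normal_elem :: "('a, 'b) ring_scheme \<Rightarrow> 'a \<Rightarrow> bool" where
  "normal_elem R v \<longleftrightarrow> v \<in> carrier R \<and>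
     (\<lambda>r. v \<otimes>\<^bsub>R\<^esub> r) ` carrier R = (\<lambda>r. r \<otimes>\<^bsub>R\<^esub> v) ` carrier R"

definition prime_height :: "('a, 'b) ring_scheme \<Rightarrow> 'a set \<Rightarrow> enat" where
  "prime_height R P = Sup {enat n | n. \<exists>C :: nat \<Rightarrow> 'a set.
      (\<forall>i\<le>n. nc_prime_ideal R (C i)) \<and> (\<forall>i<n. C i \<subset> C (Suc i)) \<and> C n = P}"

definition noetherian_UFR :: "('a, 'b) ring_scheme \<Rightarrow> bool" where
  "noetherian_UFR R \<longleftrightarrow> nc_noetherian R \<and> nc_domain R \<and>
     (\<forall>P. nc_prime_ideal R P \<and> P \<noteq> {\<zero>\<^bsub>R\<^esub>} \<longrightarrow>
        (\<exists>v. normal_elem R v \<and> nc_prime_ideal R (genideal R {v}) \<and>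
             genideal R {v} \<noteq> {\<zero>\<^bsub>R\<^esub>} \<and> genideal R {v} \<subseteq> P))"

definition noetherian_UFD :: "('a, 'b) ring_scheme \<Rightarrow> bool" where
  "noetherian_UFD R \<longleftrightarrow> noetherian_UFR R \<and>
     (\<forall>P. nc_prime_ideal R P \<and> prime_height R P = 1 \<longrightarrow> nc_domain (R Quot P))"

end

theory Submission
  imports Defs
begin


lemma poly_bezout:
  fixes a b :: "'a::field poly"
  shows "\<exists>s t d. d = s*a + t*b \<and> d dvd a \<and> d dvd b"
proof (induction "if b = 0 then 0 else Suc (degree b)" arbitrary: a b rule: less_induct)
  case less
  show ?case
  proof (cases "b = 0")
    case True
    then show ?thesis by (rule_tac x=1 in exI, rule_tac x=0 in exI, auto)
  next
    case False
    have "(if a mod b = 0 then 0 else Suc (degree (a mod b))) < (if b = 0 then 0 else Suc (degree b))"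
      using False degree_mod_less[of b a] by auto
    from less[OF this] obtain s t d where d: "d = s*b + t*(a mod b)" "d dvd b" "d dvd a mod b" by blast
    have am: "a = (a div b) * b + a mod b" by simp
    have "d dvd (a div b) * b" using d(2) by (rule dvd_mult)
    hence da: "d dvd a" using d(3) am by (metis dvd_add)
    have r: "a mod b = a - (a div b)*b" using am by (metis add_diff_cancel_left')
    have "d = t*a + (s - t*(a div b))*b"
      using d(1) unfolding r by (simp add: right_diff_distrib left_diff_distrib mult.assoc)
    then show ?thesis using d(2) da by blast
  qed
qed

lemma irred_coprime:
  fixes f g :: "'a::field poly"
  assumes "irreducible f" "\<not> f dvd g"
  shows "\<exists>s t. s*g + t*f = 1"
proof -
  obtain s t d where d: "d = s*g + t*f" "d dvd g" "d dvd f" using poly_bezout[of g f] by blast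
  have "is_unit d"
  proof (rule ccontr)
    assume "\<not> is_unit d"
    with assms(1) d(3) have "f dvd d" unfolding irreducible_altdef by blast
    with d(2) assms(2) show False using dvd_trans by blast
  qed
  then obtain e where e: "1 = d*e" by (auto elim: dvdE)
  show ?thesis using e d(1) by (rule_tac x="s*e" in exI, rule_tac x="t*e" in exI) (simp add: algebra_simps)
qed

lemma irred_prime:
  fixes f a b :: "'a::field poly"
  assumes "irreducible f" "f dvd a*b" "\<not> f dvd a"
  shows "f dvd b"
proof -
  obtain s t where st: "s*a + t*f = 1" using irred_coprime[OF assms(1,3)] by blast
  have "b = (s*a + t*f)*b" using st by simp
  also have "\<dots> = s*(a*b) + (t*b)*f" by (simp add: algebra_simps)
  finally have b: "b = s*(a*b) + (t*b)*f" .
  have "f dvd s*(a*b)" using assms(2) by (rule dvd_mult)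
  moreover have "f dvd (t*b)*f" by simp
  ultimately show ?thesis by (subst b) (rule dvd_add)
qed

lemma irred_coprime_power:
  fixes f g :: "'a::field poly"
  assumes "irreducible f" "\<not> f dvd g"
  shows "\<exists>s t. s*g + t*f^k = 1"
proof (induction k)
  case 0
  then show ?case by (rule_tac x=0 in exI, rule_tac x=1 in exI, simp)
next
  case (Suc k)
  then obtain u v where uv: "u*g + v*f^k = 1" by blast
  obtain s t where st: "s*g + t*f = 1" using irred_coprime[OF assms] by blast
  have "1 = (u*g + v*f^k) * (s*g + t*f)" using uv st by simp
  also have "\<dots> = (u*s*g + u*t*f + v*f^k*s)*g + (v*t)*f^Suc k" by (simp add: algebra_simps)
  finally show ?case by metis
qed

lemma exists_irred_factor:
  fixes g :: "'a::field poly"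
  assumes "degree g > 0"
  shows "\<exists>f. irreducible f \<and> f dvd g"
  using assms
proof (induction "degree g" arbitrary: g rule: less_induct)
  case less
  show ?case
  proof (cases "irreducible g")
    case True then show ?thesis by (meson dvd_refl)
  next
    case False
    have g00: "g \<noteq> 0" using less(2) by auto
    have g0: "g \<noteq> 0" "\<not> is_unit g" using less(2) is_unit_iff_degree[OF g00] g00 by auto
    with False obtain b where b: "b dvd g" "\<not> g dvd b" "\<not> is_unit b"
      unfolding irreducible_altdef by blast
    then obtain c where c: "g = b*c" by (auto elim: dvdE)
    have "b \<noteq> 0" "c \<noteq> 0" using c g0 by auto
    have "\<not> is_unit c" using b(2) c by (metis dvd_mult_unit_iff dvd_refl mult.commute)
    hence "degree c > 0" using \<open>c \<noteq> 0\<close> is_unit_iff_degree by auto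
    have "degree g = degree b + degree c" using c \<open>b\<noteq>0\<close> \<open>c\<noteq>0\<close> degree_mult_eq by blast
    hence "degree b < degree g" using \<open>degree c > 0\<close> by simp
    moreover have "degree b > 0" using b(3) \<open>b \<noteq> 0\<close> is_unit_iff_degree by auto
    ultimately obtain f where "irreducible f" "f dvd b" using less(1) by blast
    then show ?thesis using b(1) dvd_trans by blast
  qed
qed



lemma A_alg_simps[simp]: "carrier (A_alg h) = UNIV" "monoid.mult (A_alg h) = A_mult h"
  "one (A_alg h) = 1" "zero (A_alg h) = 0" "add (A_alg h) = (+)"
  by (simp_all add: A_alg_def)

lemma A_delta_0[simp]: "A_delta h 0 = 0" by (simp add: A_delta_def)
lemma A_delta_1[simp]: "A_delta h 1 = 0" by (simp add: A_delta_def)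
lemma A_delta_mult_const: "pderiv c = 0 \<Longrightarrow> A_delta h (c*a) = c * A_delta h a"
  by (simp add: A_delta_def pderiv_mult algebra_simps)

lemma coeff_A_ymul: "coeff (A_ymul h q) k = (if k = 0 then 0 else coeff q (k-1)) + A_delta h (coeff q k)"
  by (cases k) (simp_all add: A_ymul_def coeff_map_poly)

lemma smult_sum_poly: "smult c (sum f A) = (\<Sum>i\<in>A. smult c (f i))"
  by (rule poly_eqI) (simp add: coeff_sum sum_distrib_left)

lemma A_mult_ext: assumes "degree p \<le> N"
  shows "A_mult h p q = (\<Sum>i\<le>N. smult (coeff p i) ((A_ymul h ^^ i) q))"
  unfolding A_mult_def
  by (rule sum.mono_neutral_left) (use assms in \<open>auto simp: coeff_eq_0\<close>)

lemma A_mult_const_left: "A_mult h [:g:] q = smult g q"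
  by (simp add: A_mult_def)

lemma A_mult_y_left: "A_mult h [:0,1:] q = A_ymul h q"
  by (simp add: A_mult_def atMost_Suc)

lemma ymul_monom: "A_ymul h (monom 1 m) = monom 1 (Suc m)"
  by (rule poly_eqI) (auto simp: coeff_A_ymul coeff_monom)

lemma ymulpow_monom: "(A_ymul h ^^ i) (monom 1 k) = monom 1 (i+k)"
  by (induction i) (simp_all add: ymul_monom)

lemma sum_pCons0: "(\<Sum>i\<in>A. pCons 0 (f i)) = pCons 0 (sum f A)"
  by (rule poly_eqI) (simp add: coeff_sum coeff_pCons split: nat.split)

lemma A_mult_y_right: "A_mult h c [:0,1:] = pCons 0 c"
proof -
  have y: "[:0,1:] = (monom 1 1 :: 'a poly poly)" by (simp add: monom_Suc)
  have "A_mult h c [:0,1:] = (\<Sum>i\<le>degree c. smult (coeff c i) (monom 1 (Suc i)))"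
    unfolding A_mult_def y ymulpow_monom by simp
  also have "\<dots> = (\<Sum>i\<le>degree c. pCons 0 (monom (coeff c i) i))"
    by (rule sum.cong) (simp_all add: smult_monom monom_Suc)
  also have "\<dots> = pCons 0 (\<Sum>i\<le>degree c. monom (coeff c i) i)" by (rule sum_pCons0)
  also have "\<dots> = pCons 0 c" by (simp add: poly_as_sum_of_monoms)
  finally show ?thesis .
qed

lemma ymul_smult: "pderiv c = 0 \<Longrightarrow> A_ymul h (smult c r) = smult c (A_ymul h r)"
  by (rule poly_eqI) (simp add: coeff_A_ymul A_delta_mult_const algebra_simps)

lemma ymulpow_smult: "pderiv c = 0 \<Longrightarrow> (A_ymul h ^^ i) (smult c r) = smult c ((A_ymul h ^^ i) r)"
  by (induction i) (simp_all add: ymul_smult)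

lemma A_mult_smult_right: "pderiv c = 0 \<Longrightarrow> A_mult h a (smult c r) = smult c (A_mult h a r)"
  unfolding A_mult_def by (simp add: ymulpow_smult smult_sum_poly mult.commute)

lemma A_mult_smult_left: "A_mult h (smult c r) a = smult c (A_mult h r a)"
proof -
  have "A_mult h (smult c r) a = (\<Sum>i\<le>degree r. smult (coeff (smult c r) i) ((A_ymul h ^^ i) a))"
    by (rule A_mult_ext) (rule degree_smult_le)
  also have "\<dots> = smult c (A_mult h r a)"
    unfolding A_mult_def by (simp add: smult_sum_poly)
  finally show ?thesis .
qed

lemma ypow_coeff: "(\<forall>k > degree q + i. coeff ((A_ymul h ^^ i) q) k = 0) \<and>
   coeff ((A_ymul h ^^ i) q) (degree q + i) = lead_coeff q"
proof (induction i)
  case 0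
  then show ?case by (simp add: coeff_eq_0)
next
  case (Suc i)
  let ?r = "(A_ymul h ^^ i) q"
  have IH1: "coeff ?r k = 0" if "k > degree q + i" for k using Suc.IH that by blast
  have A: "coeff (A_ymul h ?r) k = 0" if "k > degree q + Suc i" for k
  proof -
    have "coeff ?r (k-1) = 0" by (rule IH1) (use that in linarith)
    moreover have "coeff ?r k = 0" by (rule IH1) (use that in linarith)
    ultimately show ?thesis using that by (simp add: coeff_A_ymul)
  qed
  have B: "coeff (A_ymul h ?r) (degree q + Suc i) = lead_coeff q"
  proof -
    have "coeff ?r (degree q + Suc i) = 0" by (rule IH1) simp
    then show ?thesis using Suc.IH by (simp add: coeff_A_ymul)
  qed
  have E: "(A_ymul h ^^ Suc i) q = A_ymul h ?r" by simp
  show ?case unfolding E using A B by blast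
qed

lemma A_mult_lead: "coeff (A_mult h p q) (degree p + degree q) = lead_coeff p * lead_coeff q"
proof -
  have "coeff (A_mult h p q) (degree p + degree q) =
     (\<Sum>i\<le>degree p. coeff p i * coeff ((A_ymul h ^^ i) q) (degree p + degree q))"
    unfolding A_mult_def by (simp add: coeff_sum)
  also have "\<dots> = coeff p (degree p) * coeff ((A_ymul h ^^ degree p) q) (degree p + degree q) +
     (\<Sum>i\<in>{..degree p} - {degree p}. coeff p i * coeff ((A_ymul h ^^ i) q) (degree p + degree q))"
    by (rule sum.remove) auto
  also have "(\<Sum>i\<in>{..degree p} - {degree p}. coeff p i * coeff ((A_ymul h ^^ i) q) (degree p + degree q)) = 0"
  proof (rule sum.neutral, rule ballI)
    fix i assume "i \<in> {..degree p} - {degree p}"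
    hence "degree q + i < degree p + degree q" by auto
    hence "coeff ((A_ymul h ^^ i) q) (degree p + degree q) = 0" using ypow_coeff[of q i h] by blast
    thus "coeff p i * coeff ((A_ymul h ^^ i) q) (degree p + degree q) = 0" by simp
  qed
  also have "coeff ((A_ymul h ^^ degree p) q) (degree p + degree q) = lead_coeff q"
    using ypow_coeff[of q "degree p" h] by (simp add: add.commute)
  finally show ?thesis by simp
qed



context
  fixes h :: "'a::field poly"
  assumes R: "ring (A_alg h)"
begin

lemma A_assoc: "A_mult h (A_mult h a b) c = A_mult h a (A_mult h b c)"
proof -
  interpret ring "A_alg h" by (rule R)
  show ?thesis using m_assoc[of a b c] by simp
qed

lemma A_distl: "A_mult h (a + b) c = A_mult h a c + A_mult h b c"
proof -
  interpret ring "A_alg h" by (rule R)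
  show ?thesis using l_distr[of a b c] by simp
qed

lemma A_distr: "A_mult h c (a + b) = A_mult h c a + A_mult h c b"
proof -
  interpret ring "A_alg h" by (rule R)
  show ?thesis using r_distr[of a b c] by simp
qed

lemma A_one_l: "A_mult h 1 a = a"
proof -
  interpret ring "A_alg h" by (rule R)
  show ?thesis using l_one[of a] by simp
qed

lemma A_one_r: "A_mult h a 1 = a"
proof -
  interpret ring "A_alg h" by (rule R)
  show ?thesis using r_one[of a] by simp
qed

lemma A_ainv: "a_inv (A_alg h) a = -a"
proof -
  interpret ring "A_alg h" by (rule R)
  show ?thesis by (rule add.inv_equality) simp_all
qed

lemma A_neg_l: "A_mult h (-a) b = - A_mult h a b"
proof -
  interpret ring "A_alg h" by (rule R)
  show ?thesis using l_minus[of a b] by (simp add: A_ainv)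
qed

lemma A_neg_r: "A_mult h a (-b) = - A_mult h a b"
proof -
  interpret ring "A_alg h" by (rule R)
  show ?thesis using r_minus[of a b] by (simp add: A_ainv)
qed

lemma A_idealI:
  assumes "0 \<in> I" "\<And>a b. a\<in>I \<Longrightarrow> b\<in>I \<Longrightarrow> a+b\<in>I" "\<And>a. a\<in>I \<Longrightarrow> -a\<in>I"
    "\<And>a x. a\<in>I \<Longrightarrow> A_mult h x a \<in> I" "\<And>a x. a\<in>I \<Longrightarrow> A_mult h a x \<in> I"
  shows "ideal I (A_alg h)"
proof (rule idealI[OF R])
  show "subgroup I (add_monoid (A_alg h))"
  proof (rule subgroup.intro)
    show "I \<subseteq> carrier (add_monoid (A_alg h))" by simp
    show "\<And>x y. x \<in> I \<Longrightarrow> y \<in> I \<Longrightarrow> x \<otimes>\<^bsub>add_monoid (A_alg h)\<^esub> y \<in> I" using assms(2) by simp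
    show "\<one>\<^bsub>add_monoid (A_alg h)\<^esub> \<in> I" using assms(1) by simp
    fix x assume "x \<in> I"
    have "inv\<^bsub>add_monoid (A_alg h)\<^esub> x = -x" using A_ainv[of x] unfolding a_inv_def .
    then show "inv\<^bsub>add_monoid (A_alg h)\<^esub> x \<in> I" using assms(3) \<open>x \<in> I\<close> by simp
  qed
qed (use assms in simp_all)

end

definition Mset :: "'a::field poly \<Rightarrow> 'a poly poly set" where
  "Mset c = {q. \<forall>i. c dvd coeff q i}"

lemma Mset_smult: "smult c r \<in> Mset c" by (simp add: Mset_def)

lemma Mset_E: "q \<in> Mset c \<Longrightarrow> q = smult c (map_poly (\<lambda>x. x div c) q)"
  by (rule poly_eqI) (simp add: Mset_def coeff_map_poly)

lemma Mset_ideal: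
  assumes R: "ring (A_alg h)" and c: "pderiv c = 0"
  shows "ideal (Mset c) (A_alg h)"
proof (rule A_idealI[OF R])
  show "0 \<in> Mset c" by (simp add: Mset_def)
  show "a + b \<in> Mset c" if "a \<in> Mset c" "b \<in> Mset c" for a b using that by (simp add: Mset_def)
  show "- a \<in> Mset c" if "a \<in> Mset c" for a using that by (simp add: Mset_def)
  show "A_mult h x a \<in> Mset c" if "a \<in> Mset c" for a x
    using Mset_E[OF that] A_mult_smult_right[OF c, of h x] Mset_smult by metis
  show "A_mult h a x \<in> Mset c" if "a \<in> Mset c" for a x
    using Mset_E[OF that] A_mult_smult_left[of h c _ x] Mset_smult by metis
qed

lemma const_central:
  assumes R: "ring (A_alg h)" and c: "pderiv c = 0" shows "A_mult h r [:c:] = smult c r"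
proof -
  have "[:c:] = smult c (1::'a poly poly)" by simp
  then show ?thesis using A_mult_smult_right[OF c, of h r 1] A_one_r[OF R] by simp
qed



lemma irred_deg: "irreducible (f::'a::field poly) \<Longrightarrow> degree f > 0"
  using is_unit_iff_degree[of f] unfolding irreducible_def by auto

lemma irred_not_dvd_pderiv:
  fixes f :: "'a::field poly"
  assumes "irreducible f" "pderiv f \<noteq> 0"
  shows "\<not> f dvd pderiv f"
proof
  assume "f dvd pderiv f"
  hence "degree f \<le> degree (pderiv f)" using assms(2) by (rule dvd_imp_degree_le)
  moreover have "degree (pderiv f) \<le> degree f - 1" by (rule degree_le) (auto simp: coeff_pderiv coeff_eq_0)
  ultimately show False using irred_deg[OF assms(1)] by simp
qed

lemma dvd_unit_const:
  fixes f Y :: "'a::field poly"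
  assumes "c \<noteq> 0" "f dvd [:c:] * Y" shows "f dvd Y"
proof -
  have "Y = [:inverse c:] * ([:c:] * Y)" using assms(1) by (simp add: mult.assoc[symmetric])
  then show ?thesis using assms(2) by (metis dvd_mult)
qed

lemma J_one:
  fixes f h :: "'a::field poly" and J :: "'a poly set"
  assumes f: "irreducible f" "pderiv f \<noteq> 0" "\<not> f dvd h"
    and p: "CHAR('a) = p" "p > 0"
    and Jadd: "\<And>u v. u \<in> J \<Longrightarrow> v \<in> J \<Longrightarrow> u + v \<in> J"
    and Jmul: "\<And>g u. u \<in> J \<Longrightarrow> g * u \<in> J"
    and Jdelta: "\<And>u. u \<in> J \<Longrightarrow> h * pderiv u \<in> J"
    and Jz: "f ^ p \<in> J"
    and u0: "u0 \<in> J" "\<not> f ^ p dvd u0"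
  shows "1 \<in> J"
proof -
  have claim: "\<forall>u\<in>J. \<not> f ^ Suc k dvd u \<longrightarrow> (\<exists>g\<in>J. \<not> f dvd g)" if "k < p" for k
    using that
  proof (induction k)
    case 0
    then show ?case by auto
  next
    case (Suc k)
    show ?case
    proof (intro ballI impI)
      fix u assume u: "u \<in> J" "\<not> f ^ Suc (Suc k) dvd u"
      show "\<exists>g\<in>J. \<not> f dvd g"
      proof (cases "f ^ Suc k dvd u")
        case False
        then show ?thesis using Suc u by auto
      next
        case True
        then obtain w where w: "u = f ^ Suc k * w" by (auto elim: dvdE)
        have nw: "\<not> f dvd w"
        proof
          assume "f dvd w"
          then have "f ^ Suc k * f dvd f ^ Suc k * w" by (rule mult_dvd_mono[OF dvd_refl])
          then show False using u(2) w by (simp add: power_Suc2)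
        qed
        define c :: 'a where "c = of_nat (Suc k)"
        have c0: "c \<noteq> 0" unfolding c_def of_nat_eq_0_iff_char_dvd p(1)
          using Suc.prems by (auto dest: dvd_imp_le)
        define m where "m = h * (f * pderiv w + smult c (w * pderiv f))"
        have pf: "pderiv (f ^ Suc k) = smult c (f ^ k) * pderiv f" unfolding c_def by (rule pderiv_power_Suc)
        have pu: "pderiv u = f ^ Suc k * pderiv w + w * pderiv (f ^ Suc k)" unfolding w by (simp only: pderiv_mult)
        have du: "h * pderiv u = f ^ k * m"
          unfolding pu pf m_def by (simp add: algebra_simps)
        have nm: "\<not> f dvd m"
        proof
          assume "f dvd m"
          hence "f dvd f * pderiv w + smult c (w * pderiv f)"
            unfolding m_def using irred_prime[OF f(1)] f(3) by blast
          hence "f dvd smult c (w * pderiv f)" by (simp add: dvd_add_right_iff)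
          hence "f dvd w * pderiv f" using dvd_smult_cancel c0 by blast
          hence "f dvd pderiv f" using irred_prime[OF f(1)] nw by blast
          then show False using irred_not_dvd_pderiv f by blast
        qed
        have "\<not> f ^ Suc k dvd h * pderiv u"
        proof
          assume "f ^ Suc k dvd h * pderiv u"
          hence "f ^ k * f dvd f ^ k * m" using du by (simp add: power_Suc2)
          hence "f dvd m" using f(1) by (subst (asm) dvd_mult_cancel_left) (auto simp: irreducible_def)
          then show False using nm by blast
        qed
        moreover have "h * pderiv u \<in> J" using Jdelta u(1) .
        ultimately show ?thesis using Suc by auto
      qed
    qed
  qed
  have "p - 1 < p" using p by simp
  from claim[OF this] u0 p(2) obtain g where g: "g \<in> J" "\<not> f dvd g" by (auto simp: Suc_diff_1)
  obtain s t where st: "s*g + t*f^p = 1" using irred_coprime_power[OF f(1) g(2)] by blast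
  have "s*g + t*f^p \<in> J" using Jadd Jmul g(1) Jz by blast
  then show ?thesis using st by simp
qed



definition trunc_p :: "nat \<Rightarrow> 'a::comm_monoid_add poly \<Rightarrow> 'a poly" where
  "trunc_p n c = (\<Sum>i\<le>n. monom (coeff c i) i)"

lemma coeff_trunc_p: "coeff (trunc_p n c) k = (if k \<le> n then coeff c k else 0)"
  unfolding trunc_p_def by (simp add: coeff_sum coeff_monom)

lemma degree_trunc_p: "coeff c n \<noteq> 0 \<Longrightarrow> degree (trunc_p n c) = n"
proof -
  assume a: "coeff c n \<noteq> 0"
  have "degree (trunc_p n c) \<le> n" by (rule degree_le) (simp add: coeff_trunc_p)
  moreover have "n \<le> degree (trunc_p n c)" by (rule le_degree) (simp add: coeff_trunc_p a)
  ultimately show ?thesis by simp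
qed

lemma Mset_lmul: "pderiv c = 0 \<Longrightarrow> q \<in> Mset c \<Longrightarrow> A_mult h x q \<in> Mset c"
  using Mset_E A_mult_smult_right Mset_smult by metis

lemma Mset_rmul: "q \<in> Mset c \<Longrightarrow> A_mult h q x \<in> Mset c"
  using Mset_E A_mult_smult_left Mset_smult by metis

lemma Mset_add: "a \<in> Mset c \<Longrightarrow> b \<in> Mset c \<Longrightarrow> a + b \<in> Mset c"
  by (simp add: Mset_def)

lemma Mset_neg: "a \<in> Mset c \<Longrightarrow> -a \<in> Mset c"
  by (simp add: Mset_def)

lemma Mset_diff: "a \<in> Mset c \<Longrightarrow> b \<in> Mset c \<Longrightarrow> a - b \<in> Mset c"
  by (simp add: Mset_def)

lemma finite_bad: "finite {i. \<not> c dvd coeff (a::'a::field poly poly) i}"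
proof (rule finite_subset[of _ "{..degree a}"])
  show "{i. \<not> c dvd coeff a i} \<subseteq> {..degree a}"
  proof
    fix i assume "i \<in> {i. \<not> c dvd coeff a i}"
    then have "coeff a i \<noteq> 0" by auto
    then show "i \<in> {..degree a}" using le_degree by auto
  qed
qed simp

context
  fixes h f :: "'a::field poly" and p :: nat
  assumes R: "ring (A_alg h)"
    and f: "irreducible f" "pderiv f \<noteq> 0" "\<not> f dvd h"
    and p: "CHAR('a) = p" "p > 0"
begin

lemma pderiv_z: "pderiv (f ^ p) = 0"
proof -
  have "of_nat p = (0::'a)" using p(1) by (metis of_nat_CHAR)
  then show ?thesis by (simp add: pderiv_power)
qed

lemma z_not_unit: "\<not> f ^ p dvd 1"
  using f(1) p(2) by (simp add: irreducible_def is_unit_power_iff)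

lemma Z_prime_aux:
  assumes H: "\<And>r. A_mult h (A_mult h a r) b \<in> Mset (f ^ p)"
    and a: "a \<notin> Mset (f ^ p)" and b: "b \<notin> Mset (f ^ p)"
  shows False
proof -
  define z where "z = f ^ p"
  have zd: "pderiv z = 0" unfolding z_def by (rule pderiv_z)
  define Z where "Z = Mset z"
  have Zl: "A_mult h x q \<in> Z" if "q \<in> Z" for x q using that Mset_lmul[OF zd] unfolding Z_def by blast
  have Zr: "A_mult h q x \<in> Z" if "q \<in> Z" for x q using that Mset_rmul unfolding Z_def by blast
  have Zadd: "q + q' \<in> Z" if "q \<in> Z" "q' \<in> Z" for q q' using that Mset_add unfolding Z_def by blast
  have Zneg: "- q \<in> Z" if "q \<in> Z" for q using that Mset_neg unfolding Z_def by blast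
  define I where "I = {c. \<forall>r. A_mult h (A_mult h c r) b \<in> Z}"
  have Iadd: "c + c' \<in> I" if "c \<in> I" "c' \<in> I" for c c'
    using that unfolding I_def by (simp add: A_distl[OF R] Zadd)
  have Ineg: "- c \<in> I" if "c \<in> I" for c
    using that unfolding I_def by (simp add: A_neg_l[OF R] Zneg)
  have Il: "A_mult h s c \<in> I" if "c \<in> I" for s c
    using that unfolding I_def by (simp add: A_assoc[OF R] Zl)
  have Ir: "A_mult h c s \<in> I" if "c \<in> I" for s c
  proof -
    have "A_mult h (A_mult h (A_mult h c s) r) b = A_mult h (A_mult h c (A_mult h s r)) b" for r
      by (simp only: A_assoc[OF R])
    then show ?thesis using that unfolding I_def by simp
  qed
  have ZI: "c \<in> I" if "c \<in> Z" for c using that unfolding I_def by (simp add: Zr)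
  have aI: "a \<in> I" using H unfolding I_def Z_def z_def by simp
  define S where "S = {i. \<not> z dvd coeff a i}"
  have S: "finite S" "S \<noteq> {}" using finite_bad a unfolding S_def Mset_def z_def by auto
  define n where "n = Max S"
  have an: "\<not> z dvd coeff a n" using Max_in[OF S] unfolding n_def S_def by simp
  have aabove: "z dvd coeff a i" if "i > n" for i
    using Max_ge[OF S(1), of i] that unfolding n_def S_def by force
  define K where "K = {c \<in> I. \<forall>i>n. z dvd coeff c i}"
  define J where "J = (\<lambda>c. coeff c n) ` K"
  have "1 \<in> J"
  proof (rule J_one[OF f p])
    show "u + v \<in> J" if uv: "u \<in> J" "v \<in> J" for u v
    proof -
      obtain c c' where "c \<in> K" "c' \<in> K" "u = coeff c n" "v = coeff c' n" using uv unfolding J_def by blast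
      then show ?thesis unfolding J_def K_def
        by (intro image_eqI[of _ _ "c + c'"]) (auto intro: Iadd)
    qed
    show "g * u \<in> J" if uJ: "u \<in> J" for g u
    proof -
      obtain c where c: "c \<in> K" "u = coeff c n" using uJ unfolding J_def by blast
      have "A_mult h [:g:] c = smult g c" by (rule A_mult_const_left)
      moreover have "A_mult h [:g:] c \<in> I" using c(1) Il unfolding K_def by blast
      ultimately show ?thesis using c unfolding J_def K_def
        by (intro image_eqI[of _ _ "smult g c"]) auto
    qed
    show "h * pderiv u \<in> J" if uJ: "u \<in> J" for u
    proof -
      obtain c where c: "c \<in> K" "u = coeff c n" using uJ unfolding J_def by blast
      define d where "d = A_mult h [:0,1:] c + - A_mult h c [:0,1:]"
      have dI: "d \<in> I" unfolding d_def using c(1) unfolding K_def by (blast intro: Iadd Il Ir Ineg)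
      have dc: "coeff d i = h * pderiv (coeff c i)" for i
        unfolding d_def A_mult_y_left A_mult_y_right
        by (simp add: coeff_A_ymul A_delta_def coeff_pCons split: nat.split)
      have "z dvd coeff d i" if iN: "i > n" for i
      proof -
        have "z dvd coeff c i" using c(1) iN unfolding K_def by blast
        then obtain e where e: "coeff c i = z * e" by (auto elim: dvdE)
        show ?thesis unfolding dc e by (simp add: pderiv_mult zd)
      qed
      then have "d \<in> K" using dI unfolding K_def by blast
      then show ?thesis using c dc unfolding J_def by (intro image_eqI[of _ _ d]) auto
    qed
    show "f ^ p \<in> J"
    proof -
      have "monom z n \<in> Z" unfolding Z_def Mset_def by (simp add: coeff_monom)
      hence "monom z n \<in> K" unfolding K_def using ZI by (simp add: coeff_monom)
      then show ?thesis unfolding J_def by (intro image_eqI[of _ _ "monom z n"]) (auto simp: z_def)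
    qed
    show "coeff a n \<in> J" using aI aabove unfolding J_def K_def by blast
    show "\<not> f ^ p dvd coeff a n" using an unfolding z_def .
  qed
  then obtain c where c: "c \<in> I" "\<forall>i>n. z dvd coeff c i" "coeff c n = 1"
    unfolding J_def K_def by auto
  define T where "T = {i. \<not> z dvd coeff b i}"
  have T: "finite T" "T \<noteq> {}" using finite_bad b unfolding T_def Mset_def z_def by auto
  define m where "m = Max T"
  have bm: "\<not> z dvd coeff b m" using Max_in[OF T] unfolding m_def T_def by simp
  have babove: "z dvd coeff b i" if "i > m" for i
    using Max_ge[OF T(1), of i] that unfolding m_def T_def by force
  define cl where "cl = trunc_p n c"
  define bl where "bl = trunc_p m b"
  have chZ: "c - cl \<in> Z" unfolding Z_def Mset_def cl_def using c(2) by (simp add: coeff_trunc_p)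
  have bhZ: "b - bl \<in> Z" unfolding Z_def Mset_def bl_def using babove by (simp add: coeff_trunc_p)
  have dcl: "degree cl = n" "lead_coeff cl = 1" unfolding cl_def using c(3)
    by (simp_all add: degree_trunc_p coeff_trunc_p)
  have bm0: "coeff b m \<noteq> 0" using bm by auto
  have dbl: "degree bl = m" "lead_coeff bl = coeff b m" unfolding bl_def using bm0
    by (simp_all add: degree_trunc_p coeff_trunc_p)
  have "A_mult h (A_mult h c 1) b \<in> Z" using c(1) unfolding I_def by blast
  then have cb: "A_mult h c b \<in> Z" by (simp add: A_one_r[OF R])
  have split: "A_mult h c b = A_mult h cl bl + (A_mult h cl (b - bl) + A_mult h (c - cl) b)"
  proof -
    have "A_mult h c b = A_mult h (cl + (c - cl)) b" by simp
    also have "\<dots> = A_mult h cl b + A_mult h (c - cl) b" by (rule A_distl[OF R])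
    also have "A_mult h cl b = A_mult h cl (bl + (b - bl))" by simp
    also have "\<dots> = A_mult h cl bl + A_mult h cl (b - bl)" by (rule A_distr[OF R])
    finally show ?thesis by (simp add: add.assoc)
  qed
  have rest: "A_mult h cl (b - bl) + A_mult h (c - cl) b \<in> Z" by (rule Zadd[OF Zl[OF bhZ] Zr[OF chZ]])
  have "A_mult h cl bl \<in> Z"
  proof -
    have "A_mult h cl bl = A_mult h c b + - (A_mult h cl (b - bl) + A_mult h (c - cl) b)"
      using split by simp
    then show ?thesis using Zadd[OF cb Zneg[OF rest]] by simp
  qed
  hence "z dvd coeff (A_mult h cl bl) (degree cl + degree bl)" unfolding Z_def Mset_def by blast
  moreover have "coeff (A_mult h cl bl) (degree cl + degree bl) = coeff b m"
    unfolding A_mult_lead using dcl(2) dbl(2) by simp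
  ultimately have "z dvd coeff b m" by simp
  then show False using bm by blast
qed

end


lemma irred_dvd_power:
  fixes f a :: "'a::field poly"
  assumes "irreducible f" "f dvd a ^ n" shows "f dvd a"
  using assms(2)
proof (induction n)
  case 0 then show ?case using assms(1) by (simp add: irreducible_def)
next
  case (Suc n)
  then show ?case using irred_prime[OF assms(1), of a "a^n"] by auto
qed

lemma Mset_pow_ideal_aux: "pderiv z = 0 \<Longrightarrow> pderiv (z ^ Suc k) = 0"
  by (simp only: pderiv_power_Suc) simp

theorem corollary7p7:
  fixes h :: "'a::field poly" and p :: nat
  assumes "CHAR('a) = p" and "p > 0" and "h \<noteq> 0"
  shows "\<not> noetherian_UFD (A_alg h)"
proof
  assume U: "noetherian_UFD (A_alg h)"
  have dom: "nc_domain (A_alg h)" using U unfolding noetherian_UFD_def noetherian_UFR_def by blast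
  have R: "ring (A_alg h)" using dom unfolding nc_domain_def by blast
  have nozd: "\<And>a b. A_mult h a b = 0 \<Longrightarrow> a = 0 \<or> b = 0" using dom unfolding nc_domain_def by simp
  have H3: "\<And>P. nc_prime_ideal (A_alg h) P \<Longrightarrow> P \<noteq> {0} \<Longrightarrow>
      \<exists>v. normal_elem (A_alg h) v \<and> nc_prime_ideal (A_alg h) (genideal (A_alg h) {v}) \<and>
             genideal (A_alg h) {v} \<noteq> {0} \<and> genideal (A_alg h) {v} \<subseteq> P"
    using U unfolding noetherian_UFD_def noetherian_UFR_def by simp
  have H4: "\<And>P. nc_prime_ideal (A_alg h) P \<Longrightarrow> prime_height (A_alg h) P = 1 \<Longrightarrow> nc_domain (A_alg h Quot P)"
    using U unfolding noetherian_UFD_def by blast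
  interpret ring "A_alg h" by (rule R)
  have p0: "of_nat p = (0::'a)" using assms(1) by (metis of_nat_CHAR)
  have p2: "p \<ge> 2"
  proof (rule ccontr)
    assume "\<not> p \<ge> 2" then have "p = 1" using assms(2) by simp
    then show False using p0 by simp
  qed
  have pdhp: "pderiv (h ^ p) = 0" by (simp add: pderiv_power p0)
  define g where "g = [:0,1:] * h ^ p + 1"
  have dg1: "degree ([:0,1:] * h ^ p) = Suc (p * degree h)"
    using assms(3) by (simp add: degree_mult_eq degree_power_eq)
  have dg: "degree g > 0" unfolding g_def using dg1 by (subst degree_add_eq_left) auto
  obtain f where f: "irreducible f" "f dvd g" using exists_irred_factor[OF dg] by blast
  have fh: "\<not> f dvd h"
  proof
    assume fh': "f dvd h"
    have "h dvd h ^ p" using assms(2) by (simp add: dvd_power)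
    hence "f dvd h ^ p" using fh' dvd_trans by blast
    hence "f dvd [:0,1:] * h ^ p" by (rule dvd_mult)
    hence "f dvd 1" using f(2) unfolding g_def by (simp add: dvd_add_right_iff)
    then show False using f(1) by (simp add: irreducible_def)
  qed
  have fd: "pderiv f \<noteq> 0"
  proof
    assume f0: "pderiv f = 0"
    obtain q where q: "g = f * q" using f(2) by (auto elim: dvdE)
    have "pderiv g = h ^ p" unfolding g_def by (simp add: pderiv_add pdhp pderiv_pCons)
    moreover have "pderiv g = f * pderiv q" unfolding q by (simp add: pderiv_mult f0)
    ultimately have "f dvd h ^ p" by (metis dvd_triv_left)
    then show False using irred_dvd_power[OF f(1)] fh by blast
  qed
  define z where "z = f ^ p"
  have zd: "pderiv z = 0" unfolding z_def by (simp add: pderiv_power p0)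
  have z0: "z \<noteq> 0" unfolding z_def using f(1) by (simp add: irreducible_def)
  have degf: "degree f > 0" by (rule irred_deg[OF f(1)])
  have fne: "f \<noteq> 0" using f(1) by (simp add: irreducible_def)
  have degz: "degree z = p * degree f" unfolding z_def using fne by (simp add: degree_power_eq)
  define Z where "Z = Mset z"
  have Zid: "ideal Z (A_alg h)" unfolding Z_def by (rule Mset_ideal[OF R zd])
  have z1: "[:z:] \<in> Z" unfolding Z_def Mset_def by (simp add: coeff_pCons split: nat.split)
  have ZW: "Z \<subseteq> W" if "ideal W (A_alg h)" "[:z:] \<in> W" for W
  proof
    fix q assume "q \<in> Z"
    hence "q = smult z (map_poly (\<lambda>x. x div z) q)" unfolding Z_def by (rule Mset_E)
    also have "\<dots> = A_mult h [:z:] (map_poly (\<lambda>x. x div z) q)" by (simp add: A_mult_const_left)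
    finally have eq: "q = A_mult h [:z:] (map_poly (\<lambda>x. x div z) q)" .
    have memb: "A_mult h [:z:] (map_poly (\<lambda>x. x div z) q) \<in> W"
      using ideal.I_r_closed[OF that(1) that(2)] by simp
    show "q \<in> W" using memb[folded eq] .
  qed
  have Zprime: "nc_prime_ideal (A_alg h) Z"
    unfolding nc_prime_ideal_def
  proof (intro conjI ballI impI)
    show "ideal Z (A_alg h)" by (rule Zid)
    show "Z \<noteq> carrier (A_alg h)"
    proof
      assume "Z = carrier (A_alg h)"
      hence "(1::'a poly poly) \<in> Z" by simp
      hence "z dvd coeff (1::'a poly poly) 0" unfolding Z_def Mset_def by blast
      hence "z dvd 1" by simp
      then show False using z_not_unit[OF R f(1) fd fh assms(1,2)] unfolding z_def by simp
    qed
    fix a b assume "a \<in> carrier (A_alg h)" "b \<in> carrier (A_alg h)"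
      "\<forall>r\<in>carrier (A_alg h). a \<otimes>\<^bsub>A_alg h\<^esub> r \<otimes>\<^bsub>A_alg h\<^esub> b \<in> Z"
    then have H: "\<And>r. A_mult h (A_mult h a r) b \<in> Mset (f ^ p)" unfolding Z_def z_def by simp
    show "a \<in> Z \<or> b \<in> Z"
      using Z_prime_aux[OF R f(1) fd fh assms(1,2) H] unfolding Z_def z_def by blast
  qed
  have zprime: "nc_prime_ideal (A_alg h) {0}"
    unfolding nc_prime_ideal_def
  proof (intro conjI ballI impI)
    show "ideal {0} (A_alg h)" using zeroideal by simp
    show "{0} \<noteq> carrier (A_alg h)"
    proof
      assume "{0} = carrier (A_alg h)"
      hence "(1::'a poly poly) \<in> {0}" by simp
      then show False by simp
    qed
    fix a b assume "a \<in> carrier (A_alg h)" "b \<in> carrier (A_alg h)"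
      "\<forall>r\<in>carrier (A_alg h). a \<otimes>\<^bsub>A_alg h\<^esub> r \<otimes>\<^bsub>A_alg h\<^esub> b \<in> {0}"
    then have "A_mult h (A_mult h a 1) b = 0" by simp
    then show "a \<in> {0} \<or> b \<in> {0}" using nozd by (simp add: A_one_r[OF R])
  qed
  have Znz: "Z \<noteq> {0}" using z1 z0 by auto
  have bound: "n \<le> 1" if C: "\<forall>i\<le>n. nc_prime_ideal (A_alg h) (C i)" "\<forall>i<n. C i \<subset> C (Suc i)" "C n = Z"
    for n C
  proof (rule ccontr)
    assume "\<not> n \<le> 1"
    then obtain k where n: "n = Suc (Suc k)" by (metis One_nat_def Suc_le_mono le0 not0_implies_Suc)
    define Q where "Q = C (Suc k)"
    have Qp: "nc_prime_ideal (A_alg h) Q" using C(1) n unfolding Q_def by simp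
    have QZ: "Q \<subset> Z" using C(2,3) n unfolding Q_def by auto
    have CkQ: "C k \<subset> Q" using C(2) n unfolding Q_def by auto
    have "ideal (C k) (A_alg h)" using C(1) n unfolding nc_prime_ideal_def by simp
    hence "0 \<in> C k" using ideal.axioms(1) additive_subgroup.zero_closed by fastforce
    hence Qnz: "Q \<noteq> {0}" using CkQ by auto
    obtain v where v: "nc_prime_ideal (A_alg h) (genideal (A_alg h) {v})"
      "genideal (A_alg h) {v} \<noteq> {0}" "genideal (A_alg h) {v} \<subseteq> Q" using H3[OF Qp Qnz] by blast
    define W where "W = genideal (A_alg h) {v}"
    have Wid: "ideal W (A_alg h)" using v(1) unfolding W_def nc_prime_ideal_def by simp
    have vW: "v \<in> W" unfolding W_def by (rule genideal_self') simp
    have vZ: "v \<in> Z" using vW v(3) QZ unfolding W_def by blast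
    define r where "r = map_poly (\<lambda>x. x div z) v"
    have vr: "v = smult z r" unfolding r_def using vZ unfolding Z_def by (rule Mset_E)
    have "\<forall>s\<in>carrier (A_alg h). [:z:] \<otimes>\<^bsub>A_alg h\<^esub> s \<otimes>\<^bsub>A_alg h\<^esub> r \<in> W"
    proof
      fix s :: "'a poly poly"
      have "A_mult h (A_mult h [:z:] s) r = A_mult h s v"
        unfolding vr A_mult_const_left A_mult_smult_left A_mult_smult_right[OF zd] ..
      moreover have "A_mult h s v \<in> W" using ideal.I_l_closed[OF Wid vW] by simp
      ultimately show "[:z:] \<otimes>\<^bsub>A_alg h\<^esub> s \<otimes>\<^bsub>A_alg h\<^esub> r \<in> W" by simp
    qed
    then have "[:z:] \<in> W \<or> r \<in> W" using v(1) unfolding W_def[symmetric] nc_prime_ideal_def by simp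
    then show False
    proof
      assume "[:z:] \<in> W"
      then have "Z \<subseteq> W" using ZW Wid by blast
      then show False using v(3) QZ unfolding W_def by blast
    next
      assume rW: "r \<in> W"
      have all: "v \<in> Mset (z ^ Suc k)" for k
      proof (induction k)
        case 0 then show ?case using vZ unfolding Z_def by simp
      next
        case (Suc k)
        have "W \<subseteq> Mset (z ^ Suc k)" unfolding W_def
          by (rule genideal_minimal) (use Mset_ideal[OF R Mset_pow_ideal_aux[OF zd]] Suc in auto)
        hence "r \<in> Mset (z ^ Suc k)" using rW by blast
        then show ?case unfolding vr Mset_def by (simp add: mult_dvd_mono)
      qed
      have "v = 0"
      proof (rule poly_eqI)
        fix i
        show "coeff v i = coeff 0 i"
        proof (rule ccontr)
          assume ne: "coeff v i \<noteq> coeff 0 i"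
          define d where "d = degree (coeff v i)"
          have "z ^ Suc d dvd coeff v i" using all[of d] unfolding Mset_def by blast
          hence "degree (z ^ Suc d) \<le> d" unfolding d_def using ne by (intro dvd_imp_degree_le) auto
          moreover have "degree (z ^ Suc d) = Suc d * degree z" by (rule degree_power_eq[OF z0])
          moreover have "degree z > 0" using degz degf assms(2) by simp
          moreover have "Suc d \<le> Suc d * degree z" using mult_le_mono2[of 1 "degree z" "Suc d"] \<open>degree z > 0\<close> by simp
          ultimately show False by linarith
        qed
      qed
      then have "W = {0}" unfolding W_def using genideal_zero by simp
      then show False using v(2) unfolding W_def by blast
    qed
  qed
  have "prime_height (A_alg h) Z = 1"
    unfolding prime_height_def
  proof (rule antisym)
    show "Sup {enat n |n. \<exists>C. (\<forall>i\<le>n. nc_prime_ideal (A_alg h) (C i)) \<and> (\<forall>i<n. C i \<subset> C (Suc i)) \<and> C n = Z} \<le> 1"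
    proof (rule Sup_least)
      fix x assume "x \<in> {enat n |n. \<exists>C. (\<forall>i\<le>n. nc_prime_ideal (A_alg h) (C i)) \<and> (\<forall>i<n. C i \<subset> C (Suc i)) \<and> C n = Z}"
      then obtain n C where x: "x = enat n" "\<forall>i\<le>n. nc_prime_ideal (A_alg h) (C i)" "\<forall>i<n. C i \<subset> C (Suc i)" "C n = Z"
        by blast
      have "n \<le> 1" by (rule bound[OF x(2,3,4)])
      then show "x \<le> 1" unfolding x(1) by (simp add: one_enat_def)
    qed
    have "enat 1 \<in> {enat n |n. \<exists>C. (\<forall>i\<le>n. nc_prime_ideal (A_alg h) (C i)) \<and> (\<forall>i<n. C i \<subset> C (Suc i)) \<and> C n = Z}"
    proof -
      define C :: "nat \<Rightarrow> 'a poly poly set" where "C = (\<lambda>i. if i = 0 then {0} else Z)"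
      have "(\<forall>i\<le>1. nc_prime_ideal (A_alg h) (C i)) \<and> (\<forall>i<1. C i \<subset> C (Suc i)) \<and> C 1 = Z"
      proof -
        have Z0: "0 \<in> Z" unfolding Z_def Mset_def by simp
        have "{0} \<subset> Z" using Z0 Znz by auto
        then show ?thesis unfolding C_def using zprime Zprime by (auto simp: le_Suc_eq)
      qed
      then show ?thesis by blast
    qed
    then have "enat 1 \<le> Sup {enat n |n. \<exists>C. (\<forall>i\<le>n. nc_prime_ideal (A_alg h) (C i)) \<and> (\<forall>i<n. C i \<subset> C (Suc i)) \<and> C n = Z}"
      by (rule Sup_upper)
    then show "1 \<le> Sup {enat n |n. \<exists>C. (\<forall>i\<le>n. nc_prime_ideal (A_alg h) (C i)) \<and> (\<forall>i<n. C i \<subset> C (Suc i)) \<and> C n = Z}"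
      by (simp add: one_enat_def)
  qed
  then have QD: "nc_domain (A_alg h Quot Z)" using H4 Zprime by blast
  define A where "A = Z +>\<^bsub>A_alg h\<^esub> [:f:]"
  define B where "B = Z +>\<^bsub>A_alg h\<^esub> [:f ^ (p - 1):]"
  have Zsub: "Z \<subseteq> carrier (A_alg h)" by simp
  have AC: "A \<in> carrier (A_alg h Quot Z)" unfolding A_def FactRing_def using a_rcosetsI[OF Zsub] by simp
  have BC: "B \<in> carrier (A_alg h Quot Z)" unfolding B_def FactRing_def using a_rcosetsI[OF Zsub] by simp
  have fz: "f * f ^ (p - 1) = z" unfolding z_def using assms(2) by (simp add: power_Suc[symmetric])
  have "A \<otimes>\<^bsub>A_alg h Quot Z\<^esub> B = Z +>\<^bsub>A_alg h\<^esub> (A_mult h [:f:] [:f ^ (p - 1):])"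
    unfolding A_def B_def FactRing_def using ideal.rcoset_mult_add[OF Zid] by simp
  also have "A_mult h [:f:] [:f ^ (p - 1):] = [:z:]" unfolding A_mult_const_left using fz by simp
  also have "Z +>\<^bsub>A_alg h\<^esub> [:z:] = Z" by (rule a_rcos_zero[OF Zid z1])
  finally have "A \<otimes>\<^bsub>A_alg h Quot Z\<^esub> B = \<zero>\<^bsub>A_alg h Quot Z\<^esub>" by (simp add: FactRing_def)
  hence "A = \<zero>\<^bsub>A_alg h Quot Z\<^esub> \<or> B = \<zero>\<^bsub>A_alg h Quot Z\<^esub>" using QD AC BC unfolding nc_domain_def by blast
  hence "A = Z \<or> B = Z" by (simp add: FactRing_def)
  hence "[:f:] \<in> Z \<or> [:f ^ (p - 1):] \<in> Z"
    unfolding A_def B_def using ideal.rcos_const_imp_mem[OF Zid] by auto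
  hence "z dvd coeff [:f:] 0 \<or> z dvd coeff [:f ^ (p - 1):] 0" unfolding Z_def Mset_def by blast
  hence "z dvd f \<or> z dvd f ^ (p - 1)" by simp
  moreover have "f \<noteq> 0" using f(1) by (simp add: irreducible_def)
  ultimately have "degree z \<le> degree f \<or> degree z \<le> degree (f ^ (p - 1))"
    by (auto dest: dvd_imp_degree_le)
  moreover have "degree (f ^ (p - 1)) = (p - 1) * degree f" using \<open>f \<noteq> 0\<close> by (simp add: degree_power_eq)
  ultimately show False using degz degf p2 by (cases p) auto
qed


end
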